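(* Let $\mathcal X$ and $\mathcal U$ be finite nonempty sets, $f:\mathcal X\times\mathcal U\to\mathcal X$, and $\ell,g:\mathcal X\to\mathbb R$. Define, for $x\in\mathcal X$, $$V_{\mathrm A}^*(x)=\max_{\pi\in\Pi}\min_{\tau\in\mathbb N} g(\xi_x^\pi(\tau)),\qquad \tilde\ell(x)=\min\{\ell(x),V_{\mathrm A}^*(x)\},$$ $$\tilde V_{\mathrm{RA}}^*(x)=\max_{\pi\in\Pi}\max_{\tau\in\mathbb N}\min\Big\{\tilde\ell(\xi_x^\pi(\tau)),\ \min_{\kappa\le\tau} g(\xi_x^\pi(\kappa))\Big\}.$$ Then for every $x\in\mathcal X$, $$\max_{\bar\pi\in\overline\Pi}\min\Big\{\max_{\tau\in\mathbb N}\ell(\bar\xi_x^{\bar\pi}(\tau)),\ \min_{\tau\in\mathbb N} g(\bar\xi_x^{\bar\pi}(\tau))\Big\}=\max_{\mathbf u\in\mathbb U}\min\Big\{\max_{\tau\in\mathbb N}\ell(\xi_x^{\mathbf u}(\tau)),\ \min_{\kappa\in\mathbb N} g(\xi_x^{\mathbf u}(\kappa))\Big\}=\tilde V_{\mathrm{RA}}^*(x).$$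
   Context: $\mathbb N=\{0,1,2,\dots\}$. $\Pi$ is the set of maps $\pi:\mathcal X\to\mathcal U$ and $\mathbb U$ the set of action sequences $\mathbf u:\mathbb N\to\mathcal U$. For $x\in\mathcal X$ and $\pi\in\Pi$, $\xi_x^\pi:\mathbb N\to\mathcal X$ is given by $\xi_x^\pi(0)=x$, $\xi_x^\pi(t+1)=f(\xi_x^\pi(t),\pi(\xi_x^\pi(t)))$; for $\mathbf u\in\mathbb U$, $\xi_x^{\mathbf u}(0)=x$, $\xi_x^{\mathbf u}(t+1)=f(\xi_x^{\mathbf u}(t),\mathbf u(t))$. Let $\mathcal Y=\{\ell(x):x\in\mathcal X\}$, $\mathcal Z=\{g(x):x\in\mathcal X\}$, and let $\overline\Pi$ be the set of augmented policies $\bar\pi:\mathcal X\times\mathcal Y\times\mathcal Z\to\mathcal U$. For $\bar\pi\in\overline\Pi$ and $x\in\mathcal X$, the augmented trajectory $(\bar\xi_x^{\bar\pi},\bar y_x^{\bar\pi},\bar z_x^{\bar\pi})$ is defined by $\bar\xi_x^{\bar\pi}(0)=x$, $\bar y_x^{\bar\pi}(0)=\ell(x)$, $\bar z_x^{\bar\pi}(0)=g(x)$ and $\bar\xi_x^{\bar\pi}(t+1)=f\big(\bar\xi_x^{\bar\pi}(t),\bar\pi(\bar\xi_x^{\bar\pi}(t),\bar y_x^{\bar\pi}(t),\bar z_x^{\bar\pi}(t))\big)$, $\bar y_x^{\bar\pi}(t+1)=\max\{\ell(\bar\xi_x^{\bar\pi}(t+1)),\bar y_x^{\bar\pi}(t)\}$,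 $\bar z_x^{\bar\pi}(t+1)=\min\{g(\bar\xi_x^{\bar\pi}(t+1)),\bar z_x^{\bar\pi}(t)\}$. *)

theory Defs
  imports Complex_Main
begin

fun traj_pol :: "('x \<Rightarrow> 'u \<Rightarrow> 'x) \<Rightarrow> ('x \<Rightarrow> 'u) \<Rightarrow> 'x \<Rightarrow> nat \<Rightarrow> 'x" where
  "traj_pol f p x 0 = x"
| "traj_pol f p x (Suc t) = f (traj_pol f p x t) (p (traj_pol f p x t))"

fun traj_seq :: "('x \<Rightarrow> 'u \<Rightarrow> 'x) \<Rightarrow> (nat \<Rightarrow> 'u) \<Rightarrow> 'x \<Rightarrow> nat \<Rightarrow> 'x" where
  "traj_seq f u x 0 = x"
| "traj_seq f u x (Suc t) = f (traj_seq f u x t) (u t)"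

fun aug_traj :: "('x \<Rightarrow> 'u \<Rightarrow> 'x) \<Rightarrow> ('x \<Rightarrow> real) \<Rightarrow> ('x \<Rightarrow> real)
    \<Rightarrow> ('x \<Rightarrow> real \<Rightarrow> real \<Rightarrow> 'u) \<Rightarrow> 'x \<Rightarrow> nat \<Rightarrow> 'x \<times> real \<times> real" where
  "aug_traj f l g pb x 0 = (x, l x, g x)"
| "aug_traj f l g pb x (Suc t) =
     (case aug_traj f l g pb x t of (s, y, z) \<Rightarrow>
        (let s' = f s (pb s y z) in (s', max (l s') y, min (g s') z)))"

text \<open>Augmented policies: maps defined on X x Y x Z with Y = range l, Z = range g
  (extensional: undefined outside the domain).\<close>
definition aug_policies :: "('x \<Rightarrow> real) \<Rightarrow> ('x \<Rightarrow> real) \<Rightarrow> ('x \<Rightarrow> real \<Rightarrow> real \<Rightarrow> 'u) set" where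
  "aug_policies l g = {pb. \<forall>s y z. (y \<notin> range l \<or> z \<notin> range g) \<longrightarrow> pb s y z = undefined}"

definition V_A :: "('x::finite \<Rightarrow> 'u::finite \<Rightarrow> 'x) \<Rightarrow> ('x \<Rightarrow> real) \<Rightarrow> 'x \<Rightarrow> real" where
  "V_A f g x = Max ((\<lambda>p. Min (range (\<lambda>\<tau>. g (traj_pol f p x \<tau>)))) ` UNIV)"

definition l_tilde :: "('x::finite \<Rightarrow> 'u::finite \<Rightarrow> 'x) \<Rightarrow> ('x \<Rightarrow> real) \<Rightarrow> ('x \<Rightarrow> real) \<Rightarrow> 'x \<Rightarrow> real" where
  "l_tilde f l g x = min (l x) (V_A f g x)"

definition V_RA_tilde :: "('x::finite \<Rightarrow> 'u::finite \<Rightarrow> 'x) \<Rightarrow> ('x \<Rightarrow> real) \<Rightarrow> ('x \<Rightarrow> real) \<Rightarrow> 'x \<Rightarrow> real" where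
  "V_RA_tilde f l g x = Max ((\<lambda>p. Max (range (\<lambda>\<tau>.
      min (l_tilde f l g (traj_pol f p x \<tau>)) (Min ((\<lambda>\<kappa>. g (traj_pol f p x \<kappa>)) ` {..\<tau>}))))) ` UNIV)"

end

theory Submission
  imports Defs
begin

lemma fin_rng: "finite (range (\<lambda>t. h (xi t :: 'x::finite)))"
  by (rule finite_subset[of _ "range h"]) auto

lemma val_ge:
  fixes xi :: "nat \<Rightarrow> 'x::finite"
  shows "v \<le> min (Max (range (\<lambda>\<tau>. l (xi \<tau>)))) (Min (range (\<lambda>\<tau>. g (xi \<tau>))))
     \<longleftrightarrow> (\<exists>t. v \<le> l (xi t)) \<and> (\<forall>t. v \<le> g (xi t))"
  using fin_rng[of l xi] fin_rng[of g xi] by (simp add: Max_ge_iff Min_ge_iff)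

lemma val_in:
  fixes xi :: "nat \<Rightarrow> 'x::finite"
  shows "min (Max (range (\<lambda>\<tau>. l (xi \<tau>)))) (Min (range (\<lambda>\<tau>. g (xi \<tau>)))) \<in> range l \<union> range g"
proof -
  have "Max (range (\<lambda>\<tau>. l (xi \<tau>))) \<in> range (\<lambda>\<tau>. l (xi \<tau>))"
    using fin_rng[of l xi] by (intro Max_in) auto
  moreover have "Min (range (\<lambda>\<tau>. g (xi \<tau>))) \<in> range (\<lambda>\<tau>. g (xi \<tau>))"
    using fin_rng[of g xi] by (intro Min_in) auto
  ultimately show ?thesis by (auto simp: min_def)
qed

lemma Max_img_ge:
  assumes "finite (F ` S)" "S \<noteq> {}"
  shows "(v::real) \<le> Max (F ` S) \<longleftrightarrow> (\<exists>s\<in>S. v \<le> F s)"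
  using assms by (simp add: Max_ge_iff)

lemma eq_by_ge: "(\<And>v::real. v \<le> a \<longleftrightarrow> v \<le> b) \<Longrightarrow> a = b"
  by (meson order.antisym order_refl)

lemma shortcut_traj:
  assumes "i < j" "traj_seq f u x i = traj_seq f u x j"
  shows "traj_seq f (\<lambda>t. if t < i then u t else u (t + (j - i))) x t
         = traj_seq f u x (if t \<le> i then t else t + (j - i))"
proof (induction t)
  case 0 then show ?case by simp
next
  case (Suc t)
  show ?case
  proof (cases "Suc t \<le> i")
    case True then show ?thesis using Suc by simp
  next
    case False
    then have "traj_seq f (\<lambda>t. if t < i then u t else u (t + (j - i))) x t = traj_seq f u x (t + (j - i))"
      using Suc assms by (cases "t = i") auto
    then show ?thesis using False by simp
  qed
qed

lemma shortest:
  assumes "traj_seq f u x n \<in> T" "\<forall>k\<le>n. P (traj_seq f u x k)"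
  shows "\<exists>u n. traj_seq f u x n \<in> T \<and> (\<forall>k\<le>n. P (traj_seq f u x k))
     \<and> (\<forall>i j. i < j \<longrightarrow> j \<le> n \<longrightarrow> traj_seq f u x i \<noteq> traj_seq f u x j)"
  using assms
proof (induction n arbitrary: u rule: less_induct)
  case (less n)
  show ?case
  proof (cases "\<forall>i j. i < j \<longrightarrow> j \<le> n \<longrightarrow> traj_seq f u x i \<noteq> traj_seq f u x j")
    case True then show ?thesis using less.prems by blast
  next
    case False
    then obtain i j where ij: "i < j" "j \<le> n" "traj_seq f u x i = traj_seq f u x j" by blast
    define u' where "u' = (\<lambda>t. if t < i then u t else u (t + (j - i)))"
    have eq: "traj_seq f u' x t = traj_seq f u x (if t \<le> i then t else t + (j - i))" for t
      unfolding u'_def using shortcut_traj[OF ij(1) ij(3)] by blast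
    have "traj_seq f u' x (n - (j - i)) = traj_seq f u x n"
    proof (cases "n = j")
      case True
      then have "n - (j - i) = i" using ij by auto
      then show ?thesis using eq[of i] ij True by simp
    next
      case False
      then have "\<not> n - (j - i) \<le> i" using ij by auto
      then show ?thesis using eq[of "n - (j - i)"] ij by simp
    qed
    moreover have "\<forall>k\<le>n - (j - i). P (traj_seq f u' x k)"
      using less.prems(2) ij by (auto simp: eq)
    moreover have "n - (j - i) < n" using ij by auto
    ultimately show ?thesis using less.IH less.prems(1) by metis
  qed
qed

lemma path_pol:
  assumes "\<forall>i j. i < j \<longrightarrow> j \<le> n \<longrightarrow> traj_seq f u x i \<noteq> traj_seq f u x j"
  shows "t \<le> n \<Longrightarrow> traj_pol f (\<lambda>s. u (SOME i. i < n \<and> traj_seq f u x i = s)) x t = traj_seq f u x t"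
proof (induction t)
  case 0 then show ?case by simp
next
  case (Suc t)
  have "(SOME i. i < n \<and> traj_seq f u x i = traj_seq f u x t) = t"
  proof (rule some_equality)
    show "t < n \<and> traj_seq f u x t = traj_seq f u x t" using Suc by simp
  next
    fix i assume "i < n \<and> traj_seq f u x i = traj_seq f u x t"
    then show "i = t" using assms Suc.prems by (metis linorder_neqE_nat less_imp_le_nat order.strict_trans2 Suc_le_lessD)
  qed
  then show ?case using Suc by simp
qed

lemma tail_traj: "traj_seq f (\<lambda>t. u (t + m)) (traj_seq f u x m) t = traj_seq f u x (t + m)"
  by (induction t) auto

lemma concat_traj:
  "traj_seq f (\<lambda>t. if t < tau then p (traj_pol f p x t) else q (traj_pol f q (traj_pol f p x tau) (t - tau))) x t
   = (if t \<le> tau then traj_pol f p x t else traj_pol f q (traj_pol f p x tau) (t - tau))"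
proof (induction t)
  case 0 then show ?case by simp
next
  case (Suc t)
  show ?case
  proof (cases "Suc t \<le> tau")
    case True then show ?thesis using Suc by simp
  next
    case False
    have h: "traj_seq f (\<lambda>t. if t < tau then p (traj_pol f p x t) else q (traj_pol f q (traj_pol f p x tau) (t - tau))) x t
       = traj_pol f q (traj_pol f p x tau) (t - tau)" using Suc False by (cases "t = tau") auto
    have "Suc t - tau = Suc (t - tau)" using False by auto
    then show ?thesis using h False by simp
  qed
qed


lemma rng_facts:
  fixes h :: "'a \<Rightarrow> real"
  assumes "finite S" "\<forall>t. h t \<in> S"
  shows "finite (range h)" "Max (range h) \<in> S" "Min (range h) \<in> S"
    "v \<le> Max (range h) \<longleftrightarrow> (\<exists>t. v \<le> h t)"
    "v \<le> Min (range h) \<longleftrightarrow> (\<forall>t. v \<le> h t)"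
proof -
  show f: "finite (range h)" using assms by (metis finite_subset image_subset_iff)
  show "Max (range h) \<in> S" using Max_in[OF f] assms by auto
  show "Min (range h) \<in> S" using Min_in[OF f] assms by auto
  show "v \<le> Max (range h) \<longleftrightarrow> (\<exists>t. v \<le> h t)" using f by (simp add: Max_ge_iff)
  show "v \<le> Min (range h) \<longleftrightarrow> (\<forall>t. v \<le> h t)" using f by (simp add: Min_ge_iff)
qed

definition Kset :: "('x \<Rightarrow> 'u \<Rightarrow> 'x) \<Rightarrow> ('x \<Rightarrow> real) \<Rightarrow> real \<Rightarrow> 'x set" where
  "Kset f g v = {s. \<exists>w. \<forall>t. v \<le> g (traj_seq f w s t)}"

lemma K_g: "s \<in> Kset f g v \<Longrightarrow> v \<le> g s"
proof -
  assume "s \<in> Kset f g v"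
  then obtain w where "\<forall>t. v \<le> g (traj_seq f w s t)" unfolding Kset_def by auto
  then show ?thesis by (metis traj_seq.simps(1))
qed

lemma K_ex: "s \<in> Kset f g v \<Longrightarrow> \<exists>a. f s a \<in> Kset f g v"
proof -
  assume "s \<in> Kset f g v"
  then obtain w where w: "\<forall>t. v \<le> g (traj_seq f w s t)" unfolding Kset_def by auto
  have e: "traj_seq f (\<lambda>t. w (Suc t)) (f s (w 0)) t = traj_seq f w s (Suc t)" for t
    using tail_traj[of f w 1 s t] by simp
  have "\<forall>t. v \<le> g (traj_seq f (\<lambda>t. w (Suc t)) (f s (w 0)) t)" unfolding e using w by blast
  then show ?thesis unfolding Kset_def by blast
qed

lemma K_step: "s \<in> Kset f g v \<Longrightarrow> f s (SOME a. f s a \<in> Kset f g v) \<in> Kset f g v"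
  using K_ex by (metis someI_ex)

lemma K_pol: "s \<in> Kset f g v \<Longrightarrow> traj_pol f (\<lambda>s. SOME a. f s a \<in> Kset f g v) s t \<in> Kset f g v"
  by (induction t) (auto simp: K_step)

lemma reach_data:
  assumes "v \<le> l (traj_seq f u x t0)" "\<forall>t. v \<le> g (traj_seq f u x t)"
  shows "\<exists>u n. traj_seq f u x n \<in> {s. s \<in> Kset f g v \<and> v \<le> l s} \<and> (\<forall>k\<le>n. v \<le> g (traj_seq f u x k))
     \<and> (\<forall>i j. i < j \<longrightarrow> j \<le> n \<longrightarrow> traj_seq f u x i \<noteq> traj_seq f u x j)"
proof (rule shortest)
  have "\<forall>t. v \<le> g (traj_seq f (\<lambda>t. u (t + t0)) (traj_seq f u x t0) t)"
    using assms(2) by (simp add: tail_traj)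
  then show "traj_seq f u x t0 \<in> {s. s \<in> Kset f g v \<and> v \<le> l s}"
    using assms(1) unfolding Kset_def by blast
  show "\<forall>k\<le>t0. v \<le> g (traj_seq f u x k)" using assms(2) by blast
qed

lemma aug_step: "aug_traj f l g pb x (Suc t) =
  (let s' = f (fst (aug_traj f l g pb x t)) (pb (fst (aug_traj f l g pb x t)) (fst (snd (aug_traj f l g pb x t))) (snd (snd (aug_traj f l g pb x t))))
   in (s', max (l s') (fst (snd (aug_traj f l g pb x t))), min (g s') (snd (snd (aug_traj f l g pb x t)))))"
  by (simp split: prod.split)

lemma aug_seq: "fst (aug_traj f l g pb x t) =
  traj_seq f (\<lambda>t. pb (fst (aug_traj f l g pb x t)) (fst (snd (aug_traj f l g pb x t))) (snd (snd (aug_traj f l g pb x t)))) x t"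
  by (induction t) (simp_all add: aug_step Let_def del: aug_traj.simps(2))

lemma aug_props: "fst (snd (aug_traj f l g pb x t)) \<in> range l \<and> snd (snd (aug_traj f l g pb x t)) \<in> range g
  \<and> l (fst (aug_traj f l g pb x t)) \<le> fst (snd (aug_traj f l g pb x t))
  \<and> (\<exists>k\<le>t. fst (snd (aug_traj f l g pb x t)) = l (fst (aug_traj f l g pb x k)))"
proof (induction t)
  case 0 then show ?case by auto
next
  case (Suc t)
  then obtain k where k: "k \<le> t" "fst (snd (aug_traj f l g pb x t)) = l (fst (aug_traj f l g pb x k))" by blast
  have "(\<exists>k\<le>Suc t. fst (snd (aug_traj f l g pb x (Suc t))) = l (fst (aug_traj f l g pb x k)))"
  proof (cases "l (fst (aug_traj f l g pb x (Suc t))) \<le> fst (snd (aug_traj f l g pb x t))")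
    case True
    then show ?thesis using k by (intro exI[of _ k]) (auto simp: aug_step Let_def max_def simp del: aug_traj.simps(2))
  next
    case False
    then show ?thesis by (intro exI[of _ "Suc t"]) (auto simp: aug_step Let_def max_def simp del: aug_traj.simps(2))
  qed
  moreover have "fst (snd (aug_traj f l g pb x (Suc t))) \<in> range l \<and> snd (snd (aug_traj f l g pb x (Suc t))) \<in> range g
     \<and> l (fst (aug_traj f l g pb x (Suc t))) \<le> fst (snd (aug_traj f l g pb x (Suc t)))"
    using Suc by (auto simp: aug_step Let_def max_def min_def simp del: aug_traj.simps(2))
  ultimately show ?case by blast
qed


lemma aug_construct:
  fixes f :: "'x::finite \<Rightarrow> 'u::finite \<Rightarrow> 'x"
  assumes "v \<le> l (traj_seq f u x t0)" "\<forall>t. v \<le> g (traj_seq f u x t)"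
  shows "\<exists>pb\<in>aug_policies l g. (\<exists>t. v \<le> l (fst (aug_traj f l g pb x t))) \<and> (\<forall>t. v \<le> g (fst (aug_traj f l g pb x t)))"
proof -
  obtain u2 n where T: "traj_seq f u2 x n \<in> Kset f g v" "v \<le> l (traj_seq f u2 x n)"
    and G: "\<forall>k\<le>n. v \<le> g (traj_seq f u2 x k)"
    and D: "\<forall>i j. i < j \<longrightarrow> j \<le> n \<longrightarrow> traj_seq f u2 x i \<noteq> traj_seq f u2 x j"
    using reach_data[where l=l and g=g and f=f and u=u and x=x, OF assms] by auto
  define p where "p = (\<lambda>s. u2 (SOME i. i < n \<and> traj_seq f u2 x i = s))"
  have pp: "t \<le> n \<Longrightarrow> traj_pol f p x t = traj_seq f u2 x t" for t
    unfolding p_def using path_pol[OF D] by blast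
  define q where "q = (\<lambda>s. SOME a. f s a \<in> Kset f g v)"
  define pb where "pb = (\<lambda>s y z. if y \<in> range l \<and> z \<in> range g then (if s \<in> Kset f g v \<and> v \<le> y then q s else p s) else undefined)"
  have pbA: "pb \<in> aug_policies l g" unfolding aug_policies_def pb_def by auto
  define S where "S = (\<lambda>t. fst (aug_traj f l g pb x t))"
  define Y where "Y = (\<lambda>t. fst (snd (aug_traj f l g pb x t)))"
  define F where "F = (\<lambda>t. S t \<in> Kset f g v \<and> v \<le> Y t)"
  have stepS: "S (Suc t) = f (S t) (if F t then q (S t) else p (S t))" for t
    using aug_props[where f=f and l=l and g=g and pb=pb and x=x and t=t] unfolding S_def Y_def F_def pb_def
    by (simp add: aug_step Let_def del: aug_traj.simps(2))
  have stepY: "Y t \<le> Y (Suc t)" for t unfolding Y_def by (simp add: aug_step Let_def del: aug_traj.simps(2))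
  have Fs: "F t \<Longrightarrow> F (Suc t)" for t
    using stepS[of t] stepY[of t] K_step[of "S t" f g v] unfolding F_def q_def by auto
  have Fm: "\<forall>t\<ge>m. F t" if "F m" for m
  proof (intro allI impI)
    fix t assume "m \<le> t"
    then show "F t" using that by (induction t rule: dec_induct) (auto intro: Fs)
  qed
  have Sp: "(\<forall>k<t. \<not> F k) \<Longrightarrow> S t = traj_pol f p x t" for t
  proof (induction t)
    case 0 then show ?case by (simp add: S_def)
  next
    case (Suc t) then show ?case by (simp add: stepS)
  qed
  have lY: "l (S t) \<le> Y t" for t using aug_props[where f=f and l=l and g=g and pb=pb and x=x and t=t] unfolding S_def Y_def by blast
  have key: "(\<forall>k<n. \<not> F k) \<Longrightarrow> F n"
  proof -
    assume a: "\<forall>k<n. \<not> F k"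
    then have "S n = traj_seq f u2 x n" using Sp pp by auto
    then show "F n" using T lY[of n] unfolding F_def by auto
  qed
  then have ex: "\<exists>m. F m" by blast
  define m where "m = (LEAST m. F m)"
  have Fm0: "F m" unfolding m_def using ex by (metis LeastI_ex)
  have nb: "k < m \<Longrightarrow> \<not> F k" for k unfolding m_def by (rule not_less_Least)
  have mn: "m \<le> n"
  proof (rule ccontr)
    assume "\<not> m \<le> n"
    then have "\<forall>k<n. \<not> F k" using nb by auto
    then have "F n" by (rule key)
    then show False using nb \<open>\<not> m \<le> n\<close> by auto
  qed
  have gS: "v \<le> g (S t)" for t
  proof (cases "t \<le> m")
    case True
    then have "\<forall>k<t. \<not> F k" using nb by auto
    then have "S t = traj_seq f u2 x t" using Sp pp True mn by auto
    then show ?thesis using G True mn by auto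
  next
    case False
    then have "F t" using Fm[OF Fm0] by auto
    then show ?thesis unfolding F_def using K_g[of "S t" f g v] by blast
  qed
  obtain k where "k \<le> m" "Y m = l (S k)" using aug_props[where f=f and l=l and g=g and pb=pb and x=x and t=m] unfolding S_def Y_def by blast
  then have lS: "\<exists>t. v \<le> l (S t)" using Fm0 unfolding F_def by auto
  show ?thesis using pbA gS lS unfolding S_def by blast
qed

lemma VA_ge:
  fixes f :: "'x::finite \<Rightarrow> 'u::finite \<Rightarrow> 'x"
  shows "v \<le> V_A f g s \<longleftrightarrow> (\<exists>q. \<forall>t. v \<le> g (traj_pol f q s t))"
proof -
  have h: "Min (range (\<lambda>\<tau>. g (traj_pol f q s \<tau>))) \<in> range g" for q
    using rng_facts(3)[of "range g" "\<lambda>\<tau>. g (traj_pol f q s \<tau>)"] by auto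
  have fin: "finite ((\<lambda>q. Min (range (\<lambda>\<tau>. g (traj_pol f q s \<tau>)))) ` UNIV)"
    by (rule finite_subset[of _ "range g"]) (use h in auto)
  show ?thesis unfolding V_A_def using fin by (simp add: Max_ge_iff Min_ge_iff fin_rng)
qed

lemma RA_ge:
  fixes f :: "'x::finite \<Rightarrow> 'u::finite \<Rightarrow> 'x"
  shows "v \<le> V_RA_tilde f l g x \<longleftrightarrow> (\<exists>p \<tau>. v \<le> l (traj_pol f p x \<tau>)
     \<and> (\<exists>q. \<forall>t. v \<le> g (traj_pol f q (traj_pol f p x \<tau>) t)) \<and> (\<forall>\<kappa>\<le>\<tau>. v \<le> g (traj_pol f p x \<kappa>)))"
proof -
  define S where "S = range (l_tilde f l g) \<union> range g"
  have finS: "finite S" unfolding S_def by auto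
  have inner_in: "min (l_tilde f l g (traj_pol f p x \<tau>)) (Min ((\<lambda>\<kappa>. g (traj_pol f p x \<kappa>)) ` {..\<tau>})) \<in> S" for p \<tau>
  proof -
    have "Min ((\<lambda>\<kappa>. g (traj_pol f p x \<kappa>)) ` {..\<tau>}) \<in> (\<lambda>\<kappa>. g (traj_pol f p x \<kappa>)) ` {..\<tau>}"
      by (rule Min_in) auto
    then have "Min ((\<lambda>\<kappa>. g (traj_pol f p x \<kappa>)) ` {..\<tau>}) \<in> range g" by blast
    then show ?thesis unfolding S_def by (auto simp: min_def)
  qed
  have inner_ge: "v \<le> Max (range (\<lambda>\<tau>. min (l_tilde f l g (traj_pol f p x \<tau>)) (Min ((\<lambda>\<kappa>. g (traj_pol f p x \<kappa>)) ` {..\<tau>}))))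
     \<longleftrightarrow> (\<exists>\<tau>. v \<le> min (l_tilde f l g (traj_pol f p x \<tau>)) (Min ((\<lambda>\<kappa>. g (traj_pol f p x \<kappa>)) ` {..\<tau>})))" for p
    by (rule rng_facts(4)[OF finS]) (use inner_in in blast)
  have outer_in: "Max (range (\<lambda>\<tau>. min (l_tilde f l g (traj_pol f p x \<tau>)) (Min ((\<lambda>\<kappa>. g (traj_pol f p x \<kappa>)) ` {..\<tau>})))) \<in> S" for p
    by (rule rng_facts(2)[OF finS]) (use inner_in in blast)
  have fin: "finite ((\<lambda>p. Max (range (\<lambda>\<tau>. min (l_tilde f l g (traj_pol f p x \<tau>)) (Min ((\<lambda>\<kappa>. g (traj_pol f p x \<kappa>)) ` {..\<tau>}))))) ` UNIV)"
    by (rule finite_subset[OF _ finS]) (use outer_in in auto)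
  have m: "v \<le> Min ((\<lambda>\<kappa>. g (traj_pol f p x \<kappa>)) ` {..\<tau>}) \<longleftrightarrow> (\<forall>\<kappa>\<le>\<tau>. v \<le> g (traj_pol f p x \<kappa>))" for p \<tau>
    by (subst Min_ge_iff) auto
  have lt: "v \<le> l_tilde f l g s \<longleftrightarrow> v \<le> l s \<and> (\<exists>q. \<forall>t. v \<le> g (traj_pol f q s t))" for s
    unfolding l_tilde_def min.bounded_iff VA_ge by (rule refl)
  show ?thesis unfolding V_RA_tilde_def Max_img_ge[OF fin UNIV_not_empty] inner_ge min.bounded_iff m lt
    by blast
qed

theorem theorem1:
  fixes f :: "'x::finite \<Rightarrow> 'u::finite \<Rightarrow> 'x"
    and l g :: "'x \<Rightarrow> real"
    and x :: 'x
  shows "Max ((\<lambda>pb. min (Max (range (\<lambda>\<tau>. l (fst (aug_traj f l g pb x \<tau>)))))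
                        (Min (range (\<lambda>\<tau>. g (fst (aug_traj f l g pb x \<tau>)))))) ` aug_policies l g)
         = Max ((\<lambda>u. min (Max (range (\<lambda>\<tau>. l (traj_seq f u x \<tau>))))
                         (Min (range (\<lambda>\<kappa>. g (traj_seq f u x \<kappa>))))) ` UNIV)
       \<and> Max ((\<lambda>u. min (Max (range (\<lambda>\<tau>. l (traj_seq f u x \<tau>))))
                         (Min (range (\<lambda>\<kappa>. g (traj_seq f u x \<kappa>))))) ` UNIV)
         = V_RA_tilde f l g x" (is "?A = ?B \<and> ?B = ?C")
proof -
  define P where "P v = (\<exists>u. (\<exists>t. v \<le> l (traj_seq f u x t)) \<and> (\<forall>t. v \<le> g (traj_seq f u x t)))" for v
  have seq: "v \<le> ?B \<longleftrightarrow> P v" for v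
  proof -
    have fin: "finite ((\<lambda>u. min (Max (range (\<lambda>\<tau>. l (traj_seq f u x \<tau>))))
                         (Min (range (\<lambda>\<kappa>. g (traj_seq f u x \<kappa>))))) ` UNIV)"
      by (rule finite_subset[of _ "range l \<union> range g"]) (use val_in in auto)
    show ?thesis unfolding P_def Max_img_ge[OF fin UNIV_not_empty] val_ge by simp
  qed
  have aug: "v \<le> ?A \<longleftrightarrow> P v" for v
  proof -
    have fin: "finite ((\<lambda>pb. min (Max (range (\<lambda>\<tau>. l (fst (aug_traj f l g pb x \<tau>)))))
                        (Min (range (\<lambda>\<tau>. g (fst (aug_traj f l g pb x \<tau>)))))) ` aug_policies l g)"
      by (rule finite_subset[of _ "range l \<union> range g"]) (rule image_subsetI, rule val_in, simp)
    have ne: "aug_policies l g \<noteq> {}" unfolding aug_policies_def by auto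
    have "v \<le> ?A \<longleftrightarrow> (\<exists>pb\<in>aug_policies l g. (\<exists>t. v \<le> l (fst (aug_traj f l g pb x t))) \<and> (\<forall>t. v \<le> g (fst (aug_traj f l g pb x t))))"
    proof -
      have vv: "v \<le> min (Max (range (\<lambda>\<tau>. l (fst (aug_traj f l g pb x \<tau>)))))
                        (Min (range (\<lambda>\<tau>. g (fst (aug_traj f l g pb x \<tau>)))))
        \<longleftrightarrow> (\<exists>t. v \<le> l (fst (aug_traj f l g pb x t))) \<and> (\<forall>t. v \<le> g (fst (aug_traj f l g pb x t)))" for pb
        by (rule val_ge)
      show ?thesis unfolding Max_img_ge[OF fin ne] vv by simp
    qed
    also have "\<dots> \<longleftrightarrow> P v"
    proof
      assume "\<exists>pb\<in>aug_policies l g. (\<exists>t. v \<le> l (fst (aug_traj f l g pb x t))) \<and> (\<forall>t. v \<le> g (fst (aug_traj f l g pb x t)))"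
      then obtain pb where "(\<exists>t. v \<le> l (fst (aug_traj f l g pb x t)))" "(\<forall>t. v \<le> g (fst (aug_traj f l g pb x t)))"
        by blast
      moreover define u where "u = (\<lambda>t. pb (fst (aug_traj f l g pb x t)) (fst (snd (aug_traj f l g pb x t))) (snd (snd (aug_traj f l g pb x t))))"
      moreover have e: "fst (aug_traj f l g pb x t) = traj_seq f u x t" for t
        unfolding u_def by (rule aug_seq)
      ultimately show "P v" unfolding P_def e by blast
    next
      assume "P v"
      then show "\<exists>pb\<in>aug_policies l g. (\<exists>t. v \<le> l (fst (aug_traj f l g pb x t))) \<and> (\<forall>t. v \<le> g (fst (aug_traj f l g pb x t)))"
        unfolding P_def using aug_construct by metis
    qed
    finally show ?thesis .
  qed
  have ra: "v \<le> ?C \<longleftrightarrow> P v" for v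
  proof
    assume vc: "v \<le> ?C"
    obtain p tau q where a: "v \<le> l (traj_pol f p x tau)"
      "\<forall>t. v \<le> g (traj_pol f q (traj_pol f p x tau) t)" "\<forall>\<kappa>\<le>tau. v \<le> g (traj_pol f p x \<kappa>)"
      using vc unfolding RA_ge by blast
    define u where "u = (\<lambda>t. if t < tau then p (traj_pol f p x t) else q (traj_pol f q (traj_pol f p x tau) (t - tau)))"
    have e: "traj_seq f u x t = (if t \<le> tau then traj_pol f p x t else traj_pol f q (traj_pol f p x tau) (t - tau))" for t
      unfolding u_def by (rule concat_traj)
    have "v \<le> l (traj_seq f u x tau)" using a e by simp
    moreover have "\<forall>t. v \<le> g (traj_seq f u x t)" using a e by simp
    ultimately show "P v" unfolding P_def by blast
  next
    assume "P v"
    then obtain u t0 where ut: "v \<le> l (traj_seq f u x t0)" "\<forall>t. v \<le> g (traj_seq f u x t)" unfolding P_def by blast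
    obtain u2 n where T: "traj_seq f u2 x n \<in> Kset f g v" "v \<le> l (traj_seq f u2 x n)"
      and G: "\<forall>k\<le>n. v \<le> g (traj_seq f u2 x k)"
      and D: "\<forall>i j. i < j \<longrightarrow> j \<le> n \<longrightarrow> traj_seq f u2 x i \<noteq> traj_seq f u2 x j"
      using reach_data[where l=l and g=g and f=f and u=u and x=x, OF ut] by auto
    define p where "p = (\<lambda>s. u2 (SOME i. i < n \<and> traj_seq f u2 x i = s))"
    have pp: "t \<le> n \<Longrightarrow> traj_pol f p x t = traj_seq f u2 x t" for t
      unfolding p_def using path_pol[OF D] by blast
    have c1: "\<forall>t. v \<le> g (traj_pol f (\<lambda>s. SOME a. f s a \<in> Kset f g v) (traj_pol f p x n) t)"
      using K_pol[OF T(1)] K_g[where f=f and g=g and v=v] pp[of n] by auto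
    have c2: "v \<le> l (traj_pol f p x n)" using T pp by simp
    have c3: "\<forall>\<kappa>\<le>n. v \<le> g (traj_pol f p x \<kappa>)" using G pp by simp
    show "v \<le> ?C" unfolding RA_ge
      apply (rule exI[of _ p], rule exI[of _ n], intro conjI)
        apply (rule c2)
       apply (rule exI, rule c1)
      apply (rule c3)
      done
  qed
  have pA: "P ?A" using aug[of ?A] by (rule iffD1) (rule order_refl)
  have pB: "P ?B" using seq[of ?B] by (rule iffD1) (rule order_refl)
  have pC: "P ?C" using ra[of ?C] by (rule iffD1) (rule order_refl)
  have e1: "?A = ?B"
  proof (rule order.antisym)
    show "?A \<le> ?B" using seq[of ?A] pA by (rule iffD2)
    show "?B \<le> ?A" using aug[of ?B] pB by (rule iffD2)
  qed
  have e2: "?B = ?C"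
  proof (rule order.antisym)
    show "?B \<le> ?C" using ra[of ?B] pB by (rule iffD2)
    show "?C \<le> ?B" using seq[of ?C] pC by (rule iffD2)
  qed
  show ?thesis using e1 e2 by (rule conjI)
qed

end
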